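(* Let $G$ be a directed graph with vertices $s,t$ and $k\ge1$. For any $C_1,C_2\in L^*$ we have $|E(C_1\vee C_2)|+|E(C_1\wedge C_2)|\ge|E(C_1)|+|E(C_2)|$.
   Context: An $s$-$t$ cut of a directed graph $G$ is a set $X\subseteq E(G)$ such that removing $X$ leaves no directed $s$-$t$ path; $\Gamma_G(s,t)$ is the set of $s$-$t$ cuts of minimum cardinality. Fix a maximum-size collection $\mathcal P$ of pairwise edge-disjoint directed $s$-$t$ paths (each minimum $s$-$t$ cut contains exactly one edge of each path in $\mathcal P$). For $X,Y\in\Gamma_G(s,t)$, $S_{\min}(X\cup Y)$ (resp. $S_{\max}(X\cup Y)$) consists, for each $p\in\mathcal P$, of the edge of $(X\cup Y)\cap p$ occurring first (resp. last) along $p$. $X\le Y$ means every directed $s$-$t$ path meets an edge of $X$ at or before an edge of $Y$. $U^k_{\mathrm{lr}}$ is the set of $k$-tuples $[X_1,\dots,X_k]$ of elements of $\Gamma_G(s,t)$ with $X_i\le X_j$ for all $i<j$. $L^*$ is the lattice on $U^k_{\mathrm{lr}}$ with componentwise order, join $[X_i]_i\vee[Y_i]_i=[S_{\max}(X_i\cup Y_i)]_i$ and meet $[X_i]_i\wedge[Y_i]_i=[S_{\min}(X_i\cup Y_i)]_i$. For $C=[X_1,\dots,X_k]$, $E(C)=\bigcup_{i=1}^kX_i$. *)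

theory Defs
  imports Main
begin

text \<open>A finite directed multigraph is given by a finite edge set E together with
  tail and head maps.\<close>

definition is_path :: "'e set \<Rightarrow> ('e \<Rightarrow> 'v) \<Rightarrow> ('e \<Rightarrow> 'v) \<Rightarrow> 'v \<Rightarrow> 'v \<Rightarrow> 'e list \<Rightarrow> bool" where
  "is_path E src tgt s t p \<longleftrightarrow>
     p \<noteq> [] \<and> set p \<subseteq> E \<and>
     src (p ! 0) = s \<and> tgt (last p) = t \<and>
     (\<forall>i. Suc i < length p \<longrightarrow> tgt (p ! i) = src (p ! Suc i)) \<and>
     distinct (src (p ! 0) # map tgt p)"

definition is_cut :: "'e set \<Rightarrow> ('e \<Rightarrow> 'v) \<Rightarrow> ('e \<Rightarrow> 'v) \<Rightarrow> 'v \<Rightarrow> 'v \<Rightarrow> 'e set \<Rightarrow> bool" where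
  "is_cut E src tgt s t X \<longleftrightarrow> X \<subseteq> E \<and> (\<forall>p. is_path E src tgt s t p \<longrightarrow> set p \<inter> X \<noteq> {})"

definition min_cuts :: "'e set \<Rightarrow> ('e \<Rightarrow> 'v) \<Rightarrow> ('e \<Rightarrow> 'v) \<Rightarrow> 'v \<Rightarrow> 'v \<Rightarrow> 'e set set" where
  "min_cuts E src tgt s t =
     {X. is_cut E src tgt s t X \<and> (\<forall>Y. is_cut E src tgt s t Y \<longrightarrow> card X \<le> card Y)}"

definition disjoint_paths :: "'e set \<Rightarrow> ('e \<Rightarrow> 'v) \<Rightarrow> ('e \<Rightarrow> 'v) \<Rightarrow> 'v \<Rightarrow> 'v \<Rightarrow> 'e list set \<Rightarrow> bool" where
  "disjoint_paths E src tgt s t P \<longleftrightarrow>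
     (\<forall>p\<in>P. is_path E src tgt s t p) \<and>
     (\<forall>p\<in>P. \<forall>q\<in>P. p \<noteq> q \<longrightarrow> set p \<inter> set q = {})"

definition max_disjoint_paths :: "'e set \<Rightarrow> ('e \<Rightarrow> 'v) \<Rightarrow> ('e \<Rightarrow> 'v) \<Rightarrow> 'v \<Rightarrow> 'v \<Rightarrow> 'e list set \<Rightarrow> bool" where
  "max_disjoint_paths E src tgt s t P \<longleftrightarrow>
     disjoint_paths E src tgt s t P \<and>
     (\<forall>Q. disjoint_paths E src tgt s t Q \<longrightarrow> card Q \<le> card P)"

definition S_min :: "'e list set \<Rightarrow> 'e set \<Rightarrow> 'e set" where
  "S_min P Z = {List.hd (filter (\<lambda>e. e \<in> Z) p) | p. p \<in> P \<and> set p \<inter> Z \<noteq> {}}"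

definition S_max :: "'e list set \<Rightarrow> 'e set \<Rightarrow> 'e set" where
  "S_max P Z = {last (filter (\<lambda>e. e \<in> Z) p) | p. p \<in> P \<and> set p \<inter> Z \<noteq> {}}"

definition cut_le :: "'e set \<Rightarrow> ('e \<Rightarrow> 'v) \<Rightarrow> ('e \<Rightarrow> 'v) \<Rightarrow> 'v \<Rightarrow> 'v \<Rightarrow> 'e set \<Rightarrow> 'e set \<Rightarrow> bool" where
  "cut_le E src tgt s t X Y \<longleftrightarrow>
     (\<forall>p. is_path E src tgt s t p \<longrightarrow>
        (\<exists>i<length p. p ! i \<in> X \<and> (\<forall>j<i. p ! j \<notin> Y)))"

definition U_lr :: "'e set \<Rightarrow> ('e \<Rightarrow> 'v) \<Rightarrow> ('e \<Rightarrow> 'v) \<Rightarrow> 'v \<Rightarrow> 'v \<Rightarrow> nat \<Rightarrow> 'e set list set" where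
  "U_lr E src tgt s t k =
     {C. length C = k \<and> (\<forall>X\<in>set C. X \<in> min_cuts E src tgt s t) \<and>
         (\<forall>i j. i < j \<longrightarrow> j < k \<longrightarrow> cut_le E src tgt s t (C ! i) (C ! j))}"

definition cjoin :: "'e list set \<Rightarrow> 'e set list \<Rightarrow> 'e set list \<Rightarrow> 'e set list" where
  "cjoin P C D = map2 (\<lambda>X Y. S_max P (X \<union> Y)) C D"

definition cmeet :: "'e list set \<Rightarrow> 'e set list \<Rightarrow> 'e set list \<Rightarrow> 'e set list" where
  "cmeet P C D = map2 (\<lambda>X Y. S_min P (X \<union> Y)) C D"

definition edges_of :: "'e set list \<Rightarrow> 'e set" where
  "edges_of C = \<Union> (set C)"

end

theory Submission
  imports Defs "HOL-Library.Transitive_Closure_Table"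
begin

fun epath :: "('e \<Rightarrow> 'v) \<Rightarrow> ('e \<Rightarrow> 'v) \<Rightarrow> 'v \<Rightarrow> 'e list \<Rightarrow> 'v \<Rightarrow> bool" where
  "epath src tgt u [] v = (u = v)"
| "epath src tgt u (e # es) v = (src e = u \<and> epath src tgt (tgt e) es v)"

lemma all_nat_split: "(\<forall>i::nat. Q i) \<longleftrightarrow> Q 0 \<and> (\<forall>i. Q (Suc i))"
  by (metis nat.exhaust)

lemma epath_iff:
  "p \<noteq> [] \<Longrightarrow> epath src tgt u p v \<longleftrightarrow>
     src (p!0) = u \<and> tgt (last p) = v \<and> (\<forall>i. Suc i < length p \<longrightarrow> tgt (p!i) = src (p!Suc i))"
proof (induction p arbitrary: u)
  case Nil
  then show ?case by simp
next
  case (Cons e es)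
  show ?case
  proof (cases "es = []")
    case True
    then show ?thesis by simp
  next
    case False
    have "(\<forall>i. Suc i < length (e#es) \<longrightarrow> tgt ((e#es)!i) = src ((e#es)!Suc i)) \<longleftrightarrow>
          tgt e = src (es!0) \<and> (\<forall>i. Suc i < length es \<longrightarrow> tgt (es!i) = src (es!Suc i))"
      using False by (subst all_nat_split) auto
    then show ?thesis using Cons.IH[OF False, of "tgt e"] False by auto
  qed
qed

lemma is_path_epath:
  "is_path E src tgt s t p \<longleftrightarrow> p \<noteq> [] \<and> set p \<subseteq> E \<and> epath src tgt s p t \<and> distinct (s # map tgt p)"
  unfolding is_path_def by (auto simp: epath_iff; force)

lemma is_path_distinct: "is_path E src tgt s t p \<Longrightarrow> distinct p"
  unfolding is_path_def by (auto simp: distinct_map)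

lemma is_path_mono: "is_path F src tgt s t p \<Longrightarrow> F \<subseteq> E \<Longrightarrow> is_path E src tgt s t p"
  unfolding is_path_def by auto

lemma is_path_neq: "is_path E src tgt s t p \<Longrightarrow> s \<noteq> t"
  unfolding is_path_def
  by (metis distinct.simps(2) last_in_set last_map list.map_disc_iff)

definition bal :: "('e \<Rightarrow> 'v) \<Rightarrow> ('e \<Rightarrow> 'v) \<Rightarrow> 'e set \<Rightarrow> 'v \<Rightarrow> int" where
  "bal src tgt F x = (\<Sum>e\<in>F. of_bool (src e = x) - of_bool (tgt e = x))"

lemma epath_bal:
  "epath src tgt u p v \<Longrightarrow> distinct p \<Longrightarrow> bal src tgt (set p) x = of_bool (x = u) - of_bool (x = v)"
proof (induction p arbitrary: u)
  case Nil
  then show ?case by (simp add: bal_def)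
next
  case (Cons e es)
  then have "bal src tgt (set es) x = of_bool (x = tgt e) - of_bool (x = v)" by auto
  then show ?case using Cons.prems by (auto simp: bal_def)
qed

lemma bal_insert: "finite F \<Longrightarrow> e \<notin> F \<Longrightarrow>
   bal src tgt (insert e F) x = bal src tgt F x + of_bool (src e = x) - of_bool (tgt e = x)"
  by (simp add: bal_def)

lemma bal_remove: "finite F \<Longrightarrow> e \<in> F \<Longrightarrow>
   bal src tgt (F - {e}) x = bal src tgt F x - of_bool (src e = x) + of_bool (tgt e = x)"
  unfolding bal_def by (simp add: sum_diff1)

lemma bal_diff: "finite F \<Longrightarrow> A \<subseteq> F \<Longrightarrow> bal src tgt (F - A) x = bal src tgt F x - bal src tgt A x"
  unfolding bal_def by (simp add: sum_diff finite_subset)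

lemma epath_cross:
  "epath src tgt u p v \<Longrightarrow> u \<in> R \<Longrightarrow> v \<notin> R \<Longrightarrow> \<exists>e\<in>set p. src e \<in> R \<and> tgt e \<notin> R"
  by (induction p arbitrary: u) auto

lemma rtrancl_path_epath:
  assumes "rtrancl_path (\<lambda>u v. \<exists>e\<in>F. src e = u \<and> tgt e = v) u xs v"
  shows "\<exists>p. epath src tgt u p v \<and> map tgt p = xs \<and> set p \<subseteq> F"
  using assms
proof (induction)
  case (base x)
  then show ?case by (intro exI[of _ "[]"]) auto
next
  case (step x y ys z)
  then obtain p e where "epath src tgt y p z" "map tgt p = ys" "set p \<subseteq> F" "e \<in> F" "src e = x" "tgt e = y"
    by blast
  then show ?case by (intro exI[of _ "e # p"]) auto
qed

lemma cut_sum: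
  assumes "finite R" "s \<in> R" "t \<notin> R" "finite F"
    and "\<forall>v. v \<noteq> s \<and> v \<noteq> t \<longrightarrow> bal src tgt F v = 0"
  shows "bal src tgt F s = (\<Sum>e\<in>F. of_bool (src e \<in> R) - of_bool (tgt e \<in> R))"
proof -
  have "(\<Sum>v\<in>R. bal src tgt F v) = bal src tgt F s + (\<Sum>v\<in>R - {s}. bal src tgt F v)"
    using assms by (simp add: sum.remove)
  also have "(\<Sum>v\<in>R - {s}. bal src tgt F v) = 0"
    using assms by (intro sum.neutral) auto
  finally have 1: "(\<Sum>v\<in>R. bal src tgt F v) = bal src tgt F s" by simp
  have "(\<Sum>v\<in>R. bal src tgt F v) = (\<Sum>e\<in>F. \<Sum>v\<in>R. of_bool (src e = v) - of_bool (tgt e = v))"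
    unfolding bal_def by (rule sum.swap)
  also have "\<dots> = (\<Sum>e\<in>F. of_bool (src e \<in> R) - of_bool (tgt e \<in> R))"
  proof (rule sum.cong)
    fix e assume "e \<in> F"
    have a: "(\<Sum>v\<in>R. (of_bool (src e = v)::int)) = of_bool (src e \<in> R)"
      using assms(1) by (simp add: of_bool_def sum.delta)
    have b: "(\<Sum>v\<in>R. (of_bool (tgt e = v)::int)) = of_bool (tgt e \<in> R)"
      using assms(1) by (simp add: of_bool_def sum.delta)
    show "(\<Sum>v\<in>R. of_bool (src e = v) - of_bool (tgt e = v)) = (of_bool (src e \<in> R) - of_bool (tgt e \<in> R) :: int)"
      by (simp add: sum_subtractf a b)
  qed simp
  finally show ?thesis using 1 by simp
qed


definition sdiff :: "'a set \<Rightarrow> 'a set \<Rightarrow> 'a set" where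
  "sdiff F A = (F - A) \<union> (A - F)"

definition res :: "'e set \<Rightarrow> ('e \<Rightarrow> 'v) \<Rightarrow> ('e \<Rightarrow> 'v) \<Rightarrow> 'e set \<Rightarrow> 'v \<Rightarrow> 'v \<Rightarrow> bool" where
  "res E src tgt F u v \<longleftrightarrow> (\<exists>e\<in>E. e \<notin> F \<and> src e = u \<and> tgt e = v) \<or> (\<exists>e\<in>F. tgt e = u \<and> src e = v)"

lemma augment:
  assumes "rtrancl_path (res E src tgt F) u xs v" "distinct (u # xs)" "F \<subseteq> E" "finite E"
  shows "\<exists>A\<subseteq>E. (\<forall>e\<in>A. src e \<in> set (u#xs) \<and> tgt e \<in> set (u#xs)) \<and>
           (\<forall>x. bal src tgt (sdiff F A) x = bal src tgt F x + of_bool (x = u) - of_bool (x = v))"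
  using assms(1,2)
proof (induction)
  case (base x)
  then show ?case by (intro exI[of _ "{}"]) (auto simp: sdiff_def)
next
  case (step x y ys z)
  then obtain A where A: "A \<subseteq> E" "\<forall>e\<in>A. src e \<in> set (y#ys) \<and> tgt e \<in> set (y#ys)"
    "\<forall>w. bal src tgt (sdiff F A) w = bal src tgt F w + of_bool (w = y) - of_bool (w = z)"
    by auto
  have xn: "x \<notin> set (y#ys)" using step.prems by auto
  have finS: "finite (sdiff F A)" using A(1) assms(3,4) unfolding sdiff_def by (meson finite_Un finite_Diff finite_subset)
  from step.hyps(1) show ?case unfolding res_def
  proof (elim disjE bexE conjE)
    fix e assume e: "e \<in> E" "e \<notin> F" "src e = x" "tgt e = y"
    have eA: "e \<notin> A" using A(2) e xn by auto
    have S: "sdiff F (insert e A) = insert e (sdiff F A)" "e \<notin> sdiff F A"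
      using e eA unfolding sdiff_def by auto
    show ?thesis
      apply (intro exI[of _ "insert e A"] conjI)
      using A e apply auto[2]
      using A(3) e by (auto simp: S bal_insert[OF finS])
  next
    fix e assume e: "e \<in> F" "tgt e = x" "src e = y"
    have eA: "e \<notin> A" using A(2) e xn by auto
    have S: "sdiff F (insert e A) = sdiff F A - {e}" "e \<in> sdiff F A"
      using e eA unfolding sdiff_def by auto
    show ?thesis
      apply (intro exI[of _ "insert e A"] conjI)
      using A e assms(3) apply auto[2]
      using A(3) e by (auto simp: S bal_remove[OF finS])
  qed
qed

definition is_flow :: "'e set \<Rightarrow> ('e \<Rightarrow> 'v) \<Rightarrow> ('e \<Rightarrow> 'v) \<Rightarrow> 'v \<Rightarrow> 'v \<Rightarrow> 'e set \<Rightarrow> bool" where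
  "is_flow E src tgt s t F \<longleftrightarrow> F \<subseteq> E \<and> (\<forall>v. v \<noteq> s \<and> v \<noteq> t \<longrightarrow> bal src tgt F v = 0)"

lemma find_path:
  assumes "finite F" "\<forall>v. v \<noteq> s \<and> v \<noteq> t \<longrightarrow> bal src tgt F v = 0" "bal src tgt F s \<ge> 1" "s \<noteq> t"
  shows "\<exists>p. is_path F src tgt s t p"
proof -
  let ?r = "\<lambda>u v. \<exists>e\<in>F. src e = u \<and> tgt e = v"
  define R where "R = {v. ?r\<^sup>*\<^sup>* s v}"
  have Rsub: "R \<subseteq> insert s (tgt ` F)"
  proof
    fix v assume "v \<in> R"
    then have "?r\<^sup>*\<^sup>* s v" by (simp add: R_def)
    then show "v \<in> insert s (tgt ` F)"
      by (induction rule: rtranclp_induct) auto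
  qed
  have finR: "finite R" using Rsub assms(1) by (meson finite_imageI finite_insert finite_subset)
  have sR: "s \<in> R" by (simp add: R_def)
  have "t \<in> R"
  proof (rule ccontr)
    assume tR: "t \<notin> R"
    have "bal src tgt F s = (\<Sum>e\<in>F. of_bool (src e \<in> R) - of_bool (tgt e \<in> R))"
      using cut_sum[OF finR sR tR assms(1,2)] .
    also have "\<dots> \<le> 0"
    proof (rule sum_nonpos)
      fix e assume "e \<in> F"
      have "src e \<in> R \<Longrightarrow> tgt e \<in> R"
        unfolding R_def using \<open>e \<in> F\<close> by (auto intro: rtranclp.rtrancl_into_rtrancl)
      then show "(of_bool (src e \<in> R) - of_bool (tgt e \<in> R) :: int) \<le> 0" by auto
    qed
    finally show False using assms(3) by simp
  qed
  then have "?r\<^sup>*\<^sup>* s t" by (simp add: R_def)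
  then obtain xs where "rtrancl_path ?r s xs t" by (auto simp: rtranclp_eq_rtrancl_path)
  then obtain xs' where xs': "rtrancl_path ?r s xs' t" "distinct (s # xs')"
    by (rule rtrancl_path_distinct)
  obtain p where p: "epath src tgt s p t" "map tgt p = xs'" "set p \<subseteq> F"
    using rtrancl_path_epath[OF xs'(1)] by blast
  have "p \<noteq> []" using p(1) assms(4) by (cases p) auto
  then show ?thesis using p xs'(2) by (auto simp: is_path_epath)
qed

lemma decompose:
  assumes "s \<noteq> t"
  shows "finite F \<Longrightarrow> \<forall>v. v \<noteq> s \<and> v \<noteq> t \<longrightarrow> bal src tgt F v = 0 \<Longrightarrow> bal src tgt F s = int n \<Longrightarrow>
    \<exists>Q. finite Q \<and> disjoint_paths F src tgt s t Q \<and> card Q = n"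
proof (induction n arbitrary: F)
  case 0
  then show ?case by (intro exI[of _ "{}"]) (auto simp: disjoint_paths_def)
next
  case (Suc n)
  obtain p where p: "is_path F src tgt s t p"
    using find_path[OF Suc.prems(1,2) _ assms] Suc.prems(3) by auto
  have dp: "distinct p" using is_path_distinct[OF p] .
  have ep: "epath src tgt s p t" "set p \<subseteq> F" "p \<noteq> []" using p by (auto simp: is_path_epath)
  define F' where "F' = F - set p"
  have balF': "bal src tgt F' x = bal src tgt F x - (of_bool (x = s) - of_bool (x = t))" for x
  proof -
    have "bal src tgt F' x = bal src tgt F x - bal src tgt (set p) x"
      unfolding F'_def by (rule bal_diff[OF Suc.prems(1) ep(2)])
    then show ?thesis using epath_bal[OF ep(1) dp, of x] by simp
  qed
  have "finite F'" using Suc.prems(1) by (simp add: F'_def)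
  moreover have "\<forall>v. v \<noteq> s \<and> v \<noteq> t \<longrightarrow> bal src tgt F' v = 0" using Suc.prems(2) balF' by simp
  moreover have "bal src tgt F' s = int n" using Suc.prems(3) balF' assms by simp
  ultimately obtain Q where Q: "finite Q" "disjoint_paths F' src tgt s t Q" "card Q = n"
    using Suc.IH by blast
  have pQ: "p \<notin> Q"
  proof
    assume "p \<in> Q"
    then have "set p \<subseteq> F'" using Q(2) by (auto simp: disjoint_paths_def is_path_def)
    then show False using ep(3) by (cases p) (auto simp: F'_def)
  qed
  have "disjoint_paths F src tgt s t (insert p Q)"
    using Q(2) p unfolding disjoint_paths_def
    apply (intro conjI)
    subgoal by (auto intro: is_path_mono simp: F'_def)
    subgoal by (auto simp: is_path_def F'_def)
    done
  then show ?case using Q pQ by (intro exI[of _ "insert p Q"]) auto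
qed

lemma menger:
  assumes "finite E" "max_disjoint_paths E src tgt s t P"
  shows "\<exists>X. is_cut E src tgt s t X \<and> card X \<le> card P"
proof (cases "s = t")
  case True
  then show ?thesis by (intro exI[of _ "{}"]) (auto simp: is_cut_def dest: is_path_neq)
next
  case st: False
  define Fl where "Fl = {F. is_flow E src tgt s t F}"
  have finFl: "finite Fl" unfolding Fl_def is_flow_def using assms(1)
    by (metis (no_types, lifting) Collect_mono Pow_def finite_Pow_iff rev_finite_subset)
  have eFl: "{} \<in> Fl" by (simp add: Fl_def is_flow_def bal_def)
  define m where "m = Max ((\<lambda>F. bal src tgt F s) ` Fl)"
  obtain F where F: "F \<in> Fl" "bal src tgt F s = m"
  proof -
    have "m \<in> (\<lambda>F. bal src tgt F s) ` Fl"
      unfolding m_def using finFl eFl by (intro Max_in) auto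
    then show ?thesis using that by blast
  qed
  have maxF: "bal src tgt G s \<le> m" if "G \<in> Fl" for G
    unfolding m_def using finFl that by (intro Max_ge) auto
  have m0: "m \<ge> 0" using maxF[OF eFl] by (simp add: bal_def)
  have FE: "F \<subseteq> E" and Fc: "\<forall>v. v \<noteq> s \<and> v \<noteq> t \<longrightarrow> bal src tgt F v = 0"
    using F(1) by (auto simp: Fl_def is_flow_def)
  have finF: "finite F" using FE assms(1) by (rule finite_subset)
  obtain Q where Q: "finite Q" "disjoint_paths F src tgt s t Q" "card Q = nat m"
    using decompose[OF st finF Fc] F(2) m0 by (metis int_nat_eq)
  have "disjoint_paths E src tgt s t Q" using Q(2) FE
    unfolding disjoint_paths_def by (auto intro: is_path_mono)
  then have mP: "nat m \<le> card P" using assms(2) Q(3) by (auto simp: max_disjoint_paths_def)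
  define R where "R = {v. (res E src tgt F)\<^sup>*\<^sup>* s v}"
  have Rsub: "R \<subseteq> insert s (src ` E \<union> tgt ` E)"
  proof
    fix v assume "v \<in> R"
    then have "(res E src tgt F)\<^sup>*\<^sup>* s v" by (simp add: R_def)
    then show "v \<in> insert s (src ` E \<union> tgt ` E)"
      by (induction rule: rtranclp_induct) (use FE in \<open>auto simp: res_def\<close>)
  qed
  have finR: "finite R" using Rsub assms(1) by (meson finite_Un finite_imageI finite_insert finite_subset)
  have sR: "s \<in> R" by (simp add: R_def)
  have closed: "v \<in> R" if "u \<in> R" "res E src tgt F u v" for u v
    using that unfolding R_def by (auto intro: rtranclp.rtrancl_into_rtrancl)
  have tR: "t \<notin> R"
  proof
    assume "t \<in> R"
    then obtain xs where "rtrancl_path (res E src tgt F) s xs t"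
      by (auto simp: R_def rtranclp_eq_rtrancl_path)
    then obtain xs' where xs': "rtrancl_path (res E src tgt F) s xs' t" "distinct (s # xs')"
      by (rule rtrancl_path_distinct)
    obtain A where A: "A \<subseteq> E" "\<forall>x. bal src tgt (sdiff F A) x = bal src tgt F x + of_bool (x = s) - of_bool (x = t)"
      using augment[OF xs' FE assms(1)] by blast
    have "sdiff F A \<in> Fl" using A FE Fc unfolding Fl_def is_flow_def sdiff_def by auto
    moreover have "bal src tgt (sdiff F A) s = m + 1" using A(2) F(2) st by simp
    ultimately show False using maxF by fastforce
  qed
  define X where "X = {e\<in>E. src e \<in> R \<and> tgt e \<notin> R}"
  have cut: "is_cut E src tgt s t X"
    unfolding is_cut_def
  proof (intro conjI allI impI)
    show "X \<subseteq> E" by (auto simp: X_def)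
    fix p assume "is_path E src tgt s t p"
    then have "epath src tgt s p t" "set p \<subseteq> E" by (auto simp: is_path_epath)
    then obtain e where "e \<in> set p" "src e \<in> R" "tgt e \<notin> R" using epath_cross sR tR by metis
    then show "set p \<inter> X \<noteq> {}" using \<open>set p \<subseteq> E\<close> by (auto simp: X_def)
  qed
  have XF: "X \<subseteq> F"
  proof
    fix e assume "e \<in> X"
    then have "e \<in> E" "src e \<in> R" "tgt e \<notin> R" by (auto simp: X_def)
    then show "e \<in> F" using closed[of "src e" "tgt e"] unfolding res_def by blast
  qed
  have "m = (\<Sum>e\<in>F. of_bool (src e \<in> R) - of_bool (tgt e \<in> R))"
    using cut_sum[OF finR sR tR finF Fc] F(2) by simp
  also have "\<dots> = (\<Sum>e\<in>F. of_bool (e \<in> X))"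
  proof (rule sum.cong)
    fix e assume eF: "e \<in> F"
    have "tgt e \<in> R \<Longrightarrow> src e \<in> R" using closed[of "tgt e" "src e"] eF unfolding res_def by blast
    then show "(of_bool (src e \<in> R) - of_bool (tgt e \<in> R) :: int) = of_bool (e \<in> X)"
      using eF FE by (auto simp: X_def)
  qed simp
  also have "\<dots> = int (card X)" using finF XF by (simp add: Int_absorb1 Collect_mem_eq)
  finally have "card X \<le> card P" using mP by linarith
  then show ?thesis using cut by blast
qed


lemma mincut_struct:
  assumes "finite E" "max_disjoint_paths E src tgt s t P" "X \<in> min_cuts E src tgt s t"
  shows "finite P \<and> X \<subseteq> \<Union>(set ` P) \<and> (\<forall>p\<in>P. \<exists>j<length p. X \<inter> set p = {p!j})"
proof -
  obtain Y where Y: "is_cut E src tgt s t Y" "card Y \<le> card P" using menger[OF assms(1,2)] by blast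
  have X: "is_cut E src tgt s t X" "card X \<le> card Y" using assms(3) Y(1) by (auto simp: min_cuts_def)
  have finX: "finite X" using X(1) assms(1) by (auto simp: is_cut_def intro: finite_subset)
  have DP: "disjoint_paths E src tgt s t P" using assms(2) by (simp add: max_disjoint_paths_def)
  have meet: "set p \<inter> X \<noteq> {}" if "p \<in> P" for p
    using X(1) DP that by (auto simp: is_cut_def disjoint_paths_def)
  define g where "g p = (SOME e. e \<in> set p \<inter> X)" for p
  have g: "g p \<in> set p \<inter> X" if "p \<in> P" for p
    unfolding g_def using meet[OF that] by (metis all_not_in_conv someI_ex)
  have disj: "set p \<inter> set q = {}" if "p \<in> P" "q \<in> P" "p \<noteq> q" for p q
    using DP that by (auto simp: disjoint_paths_def)
  have inj: "inj_on g P"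
  proof (rule inj_onI)
    fix p q assume pq: "p \<in> P" "q \<in> P" "g p = g q"
    show "p = q"
    proof (rule ccontr)
      assume "p \<noteq> q"
      then have "set p \<inter> set q = {}" using disj pq(1,2) by simp
      moreover have "g p \<in> set p" "g q \<in> set q" using g pq(1,2) by auto
      ultimately show False using pq(3) by auto
    qed
  qed
  have gX: "g ` P \<subseteq> X" using g by auto
  have finP: "finite P" using finite_subset[OF gX finX] inj finite_imageD by blast
  have "card (g ` P) = card P" using inj by (rule card_image)
  then have gPX: "g ` P = X" using card_seteq[OF finX gX] X(2) Y(2) by simp
  have "X \<subseteq> \<Union>(set ` P)" using gPX g by auto
  moreover have "\<forall>p\<in>P. \<exists>j<length p. X \<inter> set p = {p!j}"
  proof
    fix p assume pP: "p \<in> P"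
    have "X \<inter> set p = {g p}"
    proof
      show "X \<inter> set p \<subseteq> {g p}"
      proof
        fix e assume "e \<in> X \<inter> set p"
        then obtain q where "q \<in> P" "e = g q" "e \<in> set p" using gPX by auto
        have "q = p"
        proof (rule ccontr)
          assume "q \<noteq> p"
          then have "set q \<inter> set p = {}" using disj \<open>q \<in> P\<close> pP by simp
          moreover have "g q \<in> set q" using g \<open>q \<in> P\<close> by auto
          ultimately show False using \<open>e = g q\<close> \<open>e \<in> set p\<close> by auto
        qed
        then show "e \<in> {g p}" using \<open>e = g q\<close> by simp
      qed
      show "{g p} \<subseteq> X \<inter> set p" using g[OF pP] by auto
    qed
    moreover obtain j where "j < length p" "p!j = g p" using g[OF pP] by (meson IntD1 in_set_conv_nth)
    ultimately show "\<exists>j<length p. X \<inter> set p = {p!j}" by auto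
  qed
  ultimately show ?thesis using finP by blast
qed

lemma card_step:
  assumes "\<forall>i j. i \<le> j \<longrightarrow> j < Suc (Suc m) \<longrightarrow> f i \<le> (f j :: nat)"
  shows "card (f ` {..<Suc (Suc m)}) = card (f ` {..<Suc m}) + (if f m < f (Suc m) then 1 else 0)"
proof -
  have eq: "f ` {..<Suc (Suc m)} = insert (f (Suc m)) (f ` {..<Suc m})"
    by (simp add: lessThan_Suc)
  have "f (Suc m) \<in> f ` {..<Suc m} \<longleftrightarrow> \<not> f m < f (Suc m)"
  proof
    assume "f (Suc m) \<in> f ` {..<Suc m}"
    then obtain j where "j < Suc m" "f (Suc m) = f j" by auto
    moreover have "f j \<le> f m" using assms \<open>j < Suc m\<close> by simp
    ultimately show "\<not> f m < f (Suc m)" by simp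
  next
    assume "\<not> f m < f (Suc m)"
    moreover have "f m \<le> f (Suc m)" using assms by simp
    ultimately have "f (Suc m) = f m" by linarith
    then show "f (Suc m) \<in> f ` {..<Suc m}" by auto
  qed
  then show ?thesis unfolding eq by (auto simp: card_insert_if)
qed

lemma count_mono:
  fixes a b :: "nat \<Rightarrow> nat"
  shows "\<forall>i j. i \<le> j \<longrightarrow> j < k \<longrightarrow> a i \<le> a j \<Longrightarrow> \<forall>i j. i \<le> j \<longrightarrow> j < k \<longrightarrow> b i \<le> b j \<Longrightarrow>
    card (a ` {..<k}) + card (b ` {..<k}) \<le>
    card ((\<lambda>i. max (a i) (b i)) ` {..<k}) + card ((\<lambda>i. min (a i) (b i)) ` {..<k})"
proof (induction k)
  case 0
  then show ?case by simp
next
  case (Suc k)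
  show ?case
  proof (cases k)
    case 0
    then show ?thesis by (simp add: lessThan_Suc)
  next
    case (Suc m)
    let ?M = "\<lambda>i. max (a i) (b i)" and ?N = "\<lambda>i. min (a i) (b i)"
    have ma: "\<forall>i j. i \<le> j \<longrightarrow> j < Suc (Suc m) \<longrightarrow> a i \<le> a j"
      and mb: "\<forall>i j. i \<le> j \<longrightarrow> j < Suc (Suc m) \<longrightarrow> b i \<le> b j"
      using Suc.prems Suc by auto
    have mM: "\<forall>i j. i \<le> j \<longrightarrow> j < Suc (Suc m) \<longrightarrow> ?M i \<le> ?M j"
      using ma mb by (meson max.mono)
    have mN: "\<forall>i j. i \<le> j \<longrightarrow> j < Suc (Suc m) \<longrightarrow> ?N i \<le> ?N j"
      using ma mb by (meson min.mono)
    have IH: "card (a ` {..<Suc m}) + card (b ` {..<Suc m}) \<le> card (?M ` {..<Suc m}) + card (?N ` {..<Suc m})"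
      using Suc.IH Suc.prems Suc by auto
    have am: "a m \<le> a (Suc m)" "b m \<le> b (Suc m)" using ma mb by auto
    have key: "(if a m < a (Suc m) then 1 else 0) + (if b m < b (Suc m) then 1 else 0) \<le>
      (if ?M m < ?M (Suc m) then 1 else 0) + (if ?N m < ?N (Suc m) then (1::nat) else 0)"
      using am by (auto simp: max_def min_def)
    show ?thesis unfolding Suc
      using card_step[OF ma] card_step[OF mb] card_step[OF mM] card_step[OF mN] IH key
      by linarith
  qed
qed

lemma last_filter_two:
  assumes "distinct p" "a < length p" "b < length p" "{x \<in> set p. Z x} = {p!a, p!b}"
  shows "last (filter Z p) = p ! max a b" "hd (filter Z p) = p ! min a b"
proof -
  have idx: "j = a \<or> j = b" if "j < length p" "Z (p!j)" for j
  proof -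
    have "p!j \<in> {x \<in> set p. Z x}" using that by (simp add: nth_mem)
    then have "p!j = p!a \<or> p!j = p!b" unfolding assms(4) by simp
    then show ?thesis using assms(1-3) that(1) by (metis nth_eq_iff_index_eq)
  qed
  have Za: "Z (p!a)" "Z (p!b)" using assms(4) by blast+
  let ?m = "max a b"
  have eqm: "p = take ?m p @ p!?m # drop (Suc ?m) p" using assms(2,3) by (simp add: id_take_nth_drop)
  have fdm: "filter Z (drop (Suc ?m) p) = []"
  proof -
    have "\<not> Z x" if "x \<in> set (drop (Suc ?m) p)" for x
    proof
      assume "Z x"
      from that obtain j where "j < length (drop (Suc ?m) p)" "x = drop (Suc ?m) p ! j"
        by (auto simp: in_set_conv_nth)
      then have "Suc ?m + j < length p" "x = p ! (Suc ?m + j)" by auto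
      then have "Suc ?m + j = a \<or> Suc ?m + j = b" using idx[of "Suc ?m + j"] \<open>Z x\<close> by blast
      then show False by (auto simp: max_def split: if_splits)
    qed
    then show ?thesis by (simp add: filter_empty_conv)
  qed
  have Zm: "Z (p!?m)" using Za by (simp add: max_def)
  have "filter Z (take ?m p @ p!?m # drop (Suc ?m) p) = filter Z (take ?m p) @ [p!?m]"
    using fdm Zm by simp
  then have "filter Z p = filter Z (take ?m p) @ [p!?m]" by (simp only: eqm[symmetric])
  then show "last (filter Z p) = p ! max a b" by simp
  let ?n = "min a b"
  have eqn: "p = take ?n p @ p!?n # drop (Suc ?n) p" using assms(2,3) by (simp add: id_take_nth_drop)
  have ftn: "filter Z (take ?n p) = []"
  proof -
    have "\<not> Z x" if "x \<in> set (take ?n p)" for x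
    proof
      assume "Z x"
      from that obtain j where "j < length (take ?n p)" "x = take ?n p ! j"
        by (auto simp: in_set_conv_nth)
      then have "j < ?n" "j < length p" "x = p ! j" by auto
      then have "j = a \<or> j = b" using idx[of j] \<open>Z x\<close> by blast
      then show False using \<open>j < ?n\<close> by (auto simp: min_def split: if_splits)
    qed
    then show ?thesis by (simp add: filter_empty_conv)
  qed
  have Zn: "Z (p!?n)" using Za by (simp add: min_def)
  have "filter Z (take ?n p @ p!?n # drop (Suc ?n) p) = p!?n # filter Z (drop (Suc ?n) p)"
    using ftn Zn by simp
  then have "filter Z p = p!?n # filter Z (drop (Suc ?n) p)" by (simp only: eqn[symmetric])
  then show "hd (filter Z p) = p ! min a b" by simp
qed

lemma card_split:
  assumes "finite P" "\<forall>p\<in>P. finite (f p)" "\<forall>p\<in>P. \<forall>q\<in>P. p \<noteq> q \<longrightarrow> f p \<inter> f q = {}"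
    "Z \<subseteq> \<Union>(f ` P)"
  shows "card Z = (\<Sum>p\<in>P. card (Z \<inter> f p))"
proof -
  have "Z = (\<Union>p\<in>P. Z \<inter> f p)" using assms(4) by blast
  moreover have "card (\<Union>p\<in>P. Z \<inter> f p) = (\<Sum>p\<in>P. card (Z \<inter> f p))"
    using assms(1-3) by (intro card_UN_disjoint) auto
  ultimately show ?thesis by simp
qed

lemma set_map2: assumes "length xs = length ys"
  shows "set (map2 f xs ys) = (\<lambda>i. f (xs!i) (ys!i)) ` {..<length xs}"
proof -
  have "map2 f xs ys = map (\<lambda>i. f (xs!i) (ys!i)) [0..<length xs]"
    using assms by (intro nth_equalityI) auto
  then show ?thesis by (simp add: atLeast0LessThan)
qed

lemma set_nth_img: "set xs = (\<lambda>i. xs!i) ` {..<length xs}"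
  by (auto simp: set_conv_nth image_def)


lemma S_max_on:
  assumes "p \<in> P" "\<forall>p\<in>P. \<forall>q\<in>P. p \<noteq> q \<longrightarrow> set p \<inter> set q = {}" "set p \<inter> Z \<noteq> {}"
  shows "S_max P Z \<inter> set p = {last (filter (\<lambda>e. e \<in> Z) p)}"
proof -
  have mem: "last (filter (\<lambda>e. e \<in> Z) q) \<in> set q" if "set q \<inter> Z \<noteq> {}" for q
  proof -
    have "filter (\<lambda>e. e \<in> Z) q \<noteq> []" using that by (auto simp: filter_empty_conv)
    then have "last (filter (\<lambda>e. e \<in> Z) q) \<in> set (filter (\<lambda>e. e \<in> Z) q)" by (rule last_in_set)
    then show ?thesis by simp
  qed
  show ?thesis
  proof
    show "S_max P Z \<inter> set p \<subseteq> {last (filter (\<lambda>e. e \<in> Z) p)}"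
    proof
      fix x assume "x \<in> S_max P Z \<inter> set p"
      then obtain q where q: "q \<in> P" "set q \<inter> Z \<noteq> {}" "x = last (filter (\<lambda>e. e \<in> Z) q)" "x \<in> set p"
        by (auto simp: S_max_def)
      then have "x \<in> set q" using mem by blast
      then have "q = p" using q assms by blast
      then show "x \<in> {last (filter (\<lambda>e. e \<in> Z) p)}" using q by simp
    qed
    show "{last (filter (\<lambda>e. e \<in> Z) p)} \<subseteq> S_max P Z \<inter> set p"
      using assms mem[OF assms(3)] by (auto simp: S_max_def)
  qed
qed

lemma S_min_on:
  assumes "p \<in> P" "\<forall>p\<in>P. \<forall>q\<in>P. p \<noteq> q \<longrightarrow> set p \<inter> set q = {}" "set p \<inter> Z \<noteq> {}"
  shows "S_min P Z \<inter> set p = {hd (filter (\<lambda>e. e \<in> Z) p)}"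
proof -
  have mem: "hd (filter (\<lambda>e. e \<in> Z) q) \<in> set q" if "set q \<inter> Z \<noteq> {}" for q
  proof -
    have "filter (\<lambda>e. e \<in> Z) q \<noteq> []" using that by (auto simp: filter_empty_conv)
    then have "hd (filter (\<lambda>e. e \<in> Z) q) \<in> set (filter (\<lambda>e. e \<in> Z) q)" by (rule hd_in_set)
    then show ?thesis by simp
  qed
  show ?thesis
  proof
    show "S_min P Z \<inter> set p \<subseteq> {hd (filter (\<lambda>e. e \<in> Z) p)}"
    proof
      fix x assume "x \<in> S_min P Z \<inter> set p"
      then obtain q where q: "q \<in> P" "set q \<inter> Z \<noteq> {}" "x = hd (filter (\<lambda>e. e \<in> Z) q)" "x \<in> set p"
        by (auto simp: S_min_def)
      then have "x \<in> set q" using mem by blast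
      then have "q = p" using q assms by blast
      then show "x \<in> {hd (filter (\<lambda>e. e \<in> Z) p)}" using q by simp
    qed
    show "{hd (filter (\<lambda>e. e \<in> Z) p)} \<subseteq> S_min P Z \<inter> set p"
      using assms mem[OF assms(3)] by (auto simp: S_min_def)
  qed
qed

lemma S_max_sub: "S_max P Z \<subseteq> \<Union>(set ` P)"
proof
  fix x assume "x \<in> S_max P Z"
  then obtain q where q: "q \<in> P" "set q \<inter> Z \<noteq> {}" "x = last (filter (\<lambda>e. e \<in> Z) q)"
    by (auto simp: S_max_def)
  have "filter (\<lambda>e. e \<in> Z) q \<noteq> []" using q(2) by (auto simp: filter_empty_conv)
  then have "x \<in> set (filter (\<lambda>e. e \<in> Z) q)" using q(3) by (metis last_in_set)
  then show "x \<in> \<Union>(set ` P)" using q(1) by auto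
qed

lemma S_min_sub: "S_min P Z \<subseteq> \<Union>(set ` P)"
proof
  fix x assume "x \<in> S_min P Z"
  then obtain q where q: "q \<in> P" "set q \<inter> Z \<noteq> {}" "x = hd (filter (\<lambda>e. e \<in> Z) q)"
    by (auto simp: S_min_def)
  have "filter (\<lambda>e. e \<in> Z) q \<noteq> []" using q(2) by (auto simp: filter_empty_conv)
  then have "x \<in> set (filter (\<lambda>e. e \<in> Z) q)" using q(3) by (metis hd_in_set)
  then show "x \<in> \<Union>(set ` P)" using q(1) by auto
qed

lemma pos_exists:
  assumes "finite E" "max_disjoint_paths E src tgt s t P" "C \<in> U_lr E src tgt s t k" "p \<in> P"
  shows "\<exists>a. (\<forall>i<k. a i < length p \<and> C!i \<inter> set p = {p ! a i}) \<and> (\<forall>i j. i \<le> j \<longrightarrow> j < k \<longrightarrow> a i \<le> a j)"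
proof -
  have C: "length C = k" "\<forall>X\<in>set C. X \<in> min_cuts E src tgt s t"
    "\<forall>i j. i < j \<longrightarrow> j < k \<longrightarrow> cut_le E src tgt s t (C ! i) (C ! j)"
    using assms(3) by (auto simp: U_lr_def)
  have pp: "is_path E src tgt s t p" using assms(2,4) by (auto simp: max_disjoint_paths_def disjoint_paths_def)
  have dp: "distinct p" using is_path_distinct[OF pp] .
  have "\<forall>i<k. \<exists>j. j < length p \<and> C!i \<inter> set p = {p!j}"
  proof (intro allI impI)
    fix i assume "i < k"
    then have "C!i \<in> min_cuts E src tgt s t" using C by auto
    then show "\<exists>j. j < length p \<and> C!i \<inter> set p = {p!j}"
      using mincut_struct[OF assms(1,2)] assms(4) by blast
  qed
  then obtain a where a: "\<forall>i<k. a i < length p \<and> C!i \<inter> set p = {p!a i}" by metis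
  have "a i \<le> a j" if "i \<le> j" "j < k" for i j
  proof (cases "i = j")
    case False
    then have "i < j" using that by simp
    then have "cut_le E src tgt s t (C ! i) (C ! j)" using C that by auto
    then obtain i' where i': "i' < length p" "p!i' \<in> C!i" "\<forall>j'<i'. p!j' \<notin> C!j"
      using pp by (auto simp: cut_le_def)
    have "p!i' \<in> C!i \<inter> set p" using i' by auto
    then have "p!i' = p!a i" using a that by auto
    then have "i' = a i" using dp i'(1) a that by (simp add: nth_eq_iff_index_eq)
    moreover have "p!a j \<in> C!j" using a that by auto
    ultimately show ?thesis using i'(3) by (meson not_le)
  qed simp
  then show ?thesis using a by blast
qed

lemma card_nth_img:
  assumes "distinct p" "\<forall>i<k. f i < length p"
  shows "card ((\<lambda>i. p ! f i) ` {..<k}) = card (f ` {..<k})"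
proof -
  have "(\<lambda>i. p ! f i) ` {..<k} = nth p ` (f ` {..<k})" by auto
  moreover have "inj_on (nth p) (f ` {..<k})" using assms by (intro inj_on_nth) auto
  ultimately show ?thesis by (simp add: card_image)
qed


theorem claim2:
  fixes E :: "'e set" and src tgt :: "'e \<Rightarrow> 'v" and s t :: 'v and k :: nat
    and P :: "'e list set" and C1 C2 :: "'e set list"
  assumes "finite E"
    and "k \<ge> 1"
    and "max_disjoint_paths E src tgt s t P"
    and "C1 \<in> U_lr E src tgt s t k" and "C2 \<in> U_lr E src tgt s t k"
  shows "card (edges_of (cjoin P C1 C2)) + card (edges_of (cmeet P C1 C2))
           \<ge> card (edges_of C1) + card (edges_of C2)"
proof -
  have L1: "length C1 = k" "\<forall>X\<in>set C1. X \<in> min_cuts E src tgt s t"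
    using assms(4) by (auto simp: U_lr_def)
  have L2: "length C2 = k" "\<forall>X\<in>set C2. X \<in> min_cuts E src tgt s t"
    using assms(5) by (auto simp: U_lr_def)
  have DP: "disjoint_paths E src tgt s t P" using assms(3) by (simp add: max_disjoint_paths_def)
  have disj: "\<forall>p\<in>P. \<forall>q\<in>P. p \<noteq> q \<longrightarrow> set p \<inter> set q = {}"
    using DP by (simp add: disjoint_paths_def)
  have pathP: "is_path E src tgt s t p" if "p \<in> P" for p
    using DP that by (simp add: disjoint_paths_def)
  have "C1!0 \<in> min_cuts E src tgt s t" using L1 assms(2) by (auto simp: nth_mem)
  then have finP: "finite P" using mincut_struct[OF assms(1,3)] by blast
  have subP: "X \<subseteq> \<Union>(set ` P)" if "X \<in> min_cuts E src tgt s t" for X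
    using mincut_struct[OF assms(1,3) that] by blast
  define E1 where "E1 = edges_of C1"
  define E2 where "E2 = edges_of C2"
  define EJ where "EJ = edges_of (cjoin P C1 C2)"
  define EM where "EM = edges_of (cmeet P C1 C2)"
  have E1eq: "E1 = (\<Union>i\<in>{..<k}. C1!i)"
    unfolding E1_def edges_of_def by (subst set_nth_img) (simp add: L1)
  have E2eq: "E2 = (\<Union>i\<in>{..<k}. C2!i)"
    unfolding E2_def edges_of_def by (subst set_nth_img) (simp add: L2)
  have EJeq: "EJ = (\<Union>i\<in>{..<k}. S_max P (C1!i \<union> C2!i))"
    unfolding EJ_def edges_of_def cjoin_def set_map2[OF trans[OF L1(1) L2(1)[symmetric]]] L1(1) by simp
  have EMeq: "EM = (\<Union>i\<in>{..<k}. S_min P (C1!i \<union> C2!i))"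
    unfolding EM_def edges_of_def cmeet_def set_map2[OF trans[OF L1(1) L2(1)[symmetric]]] L1(1) by simp
  have mc1: "C1!i \<in> min_cuts E src tgt s t" if "i < k" for i using L1 that by (auto simp: nth_mem)
  have mc2: "C2!i \<in> min_cuts E src tgt s t" if "i < k" for i using L2 that by (auto simp: nth_mem)
  have s1: "E1 \<subseteq> \<Union>(set ` P)" using E1eq subP mc1 by blast
  have s2: "E2 \<subseteq> \<Union>(set ` P)" using E2eq subP mc2 by blast
  have sJ: "EJ \<subseteq> \<Union>(set ` P)" unfolding EJeq by (rule UN_least) (rule S_max_sub)
  have sM: "EM \<subseteq> \<Union>(set ` P)" unfolding EMeq by (rule UN_least) (rule S_min_sub)
  have perp: "card (E1 \<inter> set p) + card (E2 \<inter> set p) \<le> card (EJ \<inter> set p) + card (EM \<inter> set p)"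
    if pP: "p \<in> P" for p
  proof -
    obtain a where a: "\<forall>i<k. a i < length p \<and> C1!i \<inter> set p = {p ! a i}"
        "\<forall>i j. i \<le> j \<longrightarrow> j < k \<longrightarrow> a i \<le> a j"
      using pos_exists[OF assms(1,3,4) pP] by blast
    obtain b where b: "\<forall>i<k. b i < length p \<and> C2!i \<inter> set p = {p ! b i}"
        "\<forall>i j. i \<le> j \<longrightarrow> j < k \<longrightarrow> b i \<le> b j"
      using pos_exists[OF assms(1,3,5) pP] by blast
    have dp: "distinct p" using is_path_distinct[OF pathP[OF pP]] .
    have Zi: "{x \<in> set p. x \<in> C1!i \<union> C2!i} = {p ! a i, p ! b i}" if "i < k" for i
      using a(1) b(1) that by blast
    have meet: "set p \<inter> (C1!i \<union> C2!i) \<noteq> {}" if "i < k" for i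
      using a(1) that by blast
    have I1: "E1 \<inter> set p = (\<lambda>i. p ! a i) ` {..<k}"
      unfolding E1eq using a(1) by auto
    have I2: "E2 \<inter> set p = (\<lambda>i. p ! b i) ` {..<k}"
      unfolding E2eq using b(1) by auto
    have IJ: "EJ \<inter> set p = (\<lambda>i. p ! max (a i) (b i)) ` {..<k}"
    proof -
      have "EJ \<inter> set p = (\<Union>i\<in>{..<k}. S_max P (C1!i \<union> C2!i) \<inter> set p)"
        unfolding EJeq by blast
      also have "\<dots> = (\<Union>i\<in>{..<k}. {p ! max (a i) (b i)})"
      proof (rule SUP_cong)
        fix i assume "i \<in> {..<k}"
        then have ik: "i < k" by simp
        have "S_max P (C1!i \<union> C2!i) \<inter> set p = {last (filter (\<lambda>e. e \<in> C1!i \<union> C2!i) p)}"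
          using S_max_on[OF pP disj meet[OF ik]] .
        also have "last (filter (\<lambda>e. e \<in> C1!i \<union> C2!i) p) = p ! max (a i) (b i)"
          using last_filter_two(1)[OF dp _ _ Zi[OF ik]] a(1) b(1) ik by blast
        finally show "S_max P (C1!i \<union> C2!i) \<inter> set p = {p ! max (a i) (b i)}" .
      qed simp
      finally show ?thesis by auto
    qed
    have IM: "EM \<inter> set p = (\<lambda>i. p ! min (a i) (b i)) ` {..<k}"
    proof -
      have "EM \<inter> set p = (\<Union>i\<in>{..<k}. S_min P (C1!i \<union> C2!i) \<inter> set p)"
        unfolding EMeq by blast
      also have "\<dots> = (\<Union>i\<in>{..<k}. {p ! min (a i) (b i)})"
      proof (rule SUP_cong)
        fix i assume "i \<in> {..<k}"
        then have ik: "i < k" by simp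
        have "S_min P (C1!i \<union> C2!i) \<inter> set p = {hd (filter (\<lambda>e. e \<in> C1!i \<union> C2!i) p)}"
          using S_min_on[OF pP disj meet[OF ik]] .
        also have "hd (filter (\<lambda>e. e \<in> C1!i \<union> C2!i) p) = p ! min (a i) (b i)"
          using last_filter_two(2)[OF dp _ _ Zi[OF ik]] a(1) b(1) ik by blast
        finally show "S_min P (C1!i \<union> C2!i) \<inter> set p = {p ! min (a i) (b i)}" .
      qed simp
      finally show ?thesis by auto
    qed
    have c1: "card (E1 \<inter> set p) = card (a ` {..<k})"
      unfolding I1 using a(1) dp by (intro card_nth_img) auto
    have c2: "card (E2 \<inter> set p) = card (b ` {..<k})"
      unfolding I2 using b(1) dp by (intro card_nth_img) auto
    have cJ: "card (EJ \<inter> set p) = card ((\<lambda>i. max (a i) (b i)) ` {..<k})"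
      unfolding IJ using a(1) b(1) dp by (intro card_nth_img) auto
    have cM: "card (EM \<inter> set p) = card ((\<lambda>i. min (a i) (b i)) ` {..<k})"
      unfolding IM using a(1) b(1) dp by (intro card_nth_img) (auto simp: min_def)
    show ?thesis unfolding c1 c2 cJ cM using count_mono[OF a(2) b(2)] .
  qed
  have fin: "\<forall>p\<in>P. finite (set p)" by simp
  have "card E1 + card E2 = (\<Sum>p\<in>P. card (E1 \<inter> set p) + card (E2 \<inter> set p))"
    using card_split[OF finP fin disj s1] card_split[OF finP fin disj s2] by (simp add: sum.distrib)
  also have "\<dots> \<le> (\<Sum>p\<in>P. card (EJ \<inter> set p) + card (EM \<inter> set p))"
    using perp by (rule sum_mono)
  also have "\<dots> = card EJ + card EM"
    using card_split[OF finP fin disj sJ] card_split[OF finP fin disj sM] by (simp add: sum.distrib)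
  finally show ?thesis unfolding E1_def E2_def EJ_def EM_def .
qed

end
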